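(* Let $L=\mathcal{F}(P)$ be a finite distributive lattice and let $K=[\hat0_K,\hat1_K]$ be a cutting of $L$. Then $$R(L\boxplus K,x)=R_L({\downarrow K},x)+x\,R_L({\uparrow K},x)=R({\downarrow K},x)+x^{h_L(\hat0_K)+1}R({\uparrow K},x).$$
   Context: For a finite poset $P$, $\mathcal{F}(P)$ is the set of filters (up-sets) of $P$ ordered by reverse inclusion; it is a finite distributive lattice with least element $P$ and greatest element $\emptyset$. A cutting of a finite distributive lattice $L$ is an interval $K=[\hat0_K,\hat1_K]$ of $L$ such that every maximal chain of $L$ meets $K$. For a cutting $K$ of $L=\mathcal{F}(P)$, let $S=\hat0_K\setminus\hat1_K$, $S_0$ the set of maximal elements of $P\setminus\hat0_K$, $S_1$ the set of minimal elements of $\hat1_K$. The poset $P_K$ is $P\cup\{x_K\}$ ($x_K$ new) where the order on $P$ is unchanged, $z<x_K$ iff $z\le s$ for some $s\in S_0$, $x_K<y$ iff $y\ge s$ for some $s\in S_1$, and $x_K$ is incomparable to every element of $S$. The convex expansion is $L\boxplus K:=\mathcal{F}(P_K)$. For a finite distributive lattice $M$ and $a\in M$, $h_M(a)$ is the height of $a$ (length of any maximal chain from the least element of $M$ to $a$). For $A\subseteq L$, $R_L(A,x)=\sum_{a\in A}x^{h_L(a)}$, and for a lattice $M$, $R(M,x)=R_M(M,x)=\sum_{a\in M}x^{h_M(a)}$ (rank generating function). Here ${\downarrow K}=\{a\in L: a\le\hat1_K\}$ and ${\uparrow K}=\{a\in L:a\ge\hat0_K\}$, regarded as lattices in their own right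 in $R({\downarrow K},x)$, $R({\uparrow K},x)$. *)

theory Defs
  imports Complex_Main
begin

definition partial_order_on_set :: "'a set \<Rightarrow> ('a \<Rightarrow> 'a \<Rightarrow> bool) \<Rightarrow> bool" where
  "partial_order_on_set Q le \<longleftrightarrow>
     (\<forall>x\<in>Q. le x x) \<and>
     (\<forall>x\<in>Q. \<forall>y\<in>Q. le x y \<and> le y x \<longrightarrow> x = y) \<and>
     (\<forall>x\<in>Q. \<forall>y\<in>Q. \<forall>z\<in>Q. le x y \<and> le y z \<longrightarrow> le x z)"

definition filters :: "'a set \<Rightarrow> ('a \<Rightarrow> 'a \<Rightarrow> bool) \<Rightarrow> 'a set set" where
  "filters Q le = {F. F \<subseteq> Q \<and> (\<forall>x\<in>F. \<forall>y\<in>Q. le x y \<longrightarrow> y \<in> F)}"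

definition filt_le :: "'a set \<Rightarrow> 'a set \<Rightarrow> bool" where
  "filt_le F G \<longleftrightarrow> G \<subseteq> F"

definition is_chain :: "'b set \<Rightarrow> ('b \<Rightarrow> 'b \<Rightarrow> bool) \<Rightarrow> 'b set \<Rightarrow> bool" where
  "is_chain M le C \<longleftrightarrow> C \<subseteq> M \<and> (\<forall>x\<in>C. \<forall>y\<in>C. le x y \<or> le y x)"

definition is_maximal_chain :: "'b set \<Rightarrow> ('b \<Rightarrow> 'b \<Rightarrow> bool) \<Rightarrow> 'b set \<Rightarrow> bool" where
  "is_maximal_chain M le C \<longleftrightarrow> is_chain M le C \<and> (\<forall>D. is_chain M le D \<and> C \<subseteq> D \<longrightarrow> D = C)"

definition height :: "'b set \<Rightarrow> ('b \<Rightarrow> 'b \<Rightarrow> bool) \<Rightarrow> 'b \<Rightarrow> nat" where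
  "height M le a = Max {card C | C. is_chain M le C \<and> (\<forall>c\<in>C. le c a)} - 1"

text \<open>R_M(A,x) = sum over a in A of x^(h_M(a)); R(M,x) = R_M(M,x).\<close>
definition rank_sum :: "'b set \<Rightarrow> ('b \<Rightarrow> 'b \<Rightarrow> bool) \<Rightarrow> 'b set \<Rightarrow> real \<Rightarrow> real" where
  "rank_sum M le A x = (\<Sum>a\<in>A. x ^ height M le a)"

definition rank_gen :: "'b set \<Rightarrow> ('b \<Rightarrow> 'b \<Rightarrow> bool) \<Rightarrow> real \<Rightarrow> real" where
  "rank_gen M le x = rank_sum M le M x"

definition interval_L :: "'a set set \<Rightarrow> 'a set \<Rightarrow> 'a set \<Rightarrow> 'a set set" where
  "interval_L L a0 a1 = {c\<in>L. filt_le a0 c \<and> filt_le c a1}"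

definition is_cutting :: "'a set set \<Rightarrow> 'a set \<Rightarrow> 'a set \<Rightarrow> bool" where
  "is_cutting L a0 a1 \<longleftrightarrow> a0 \<in> L \<and> a1 \<in> L \<and> filt_le a0 a1 \<and>
     (\<forall>C. is_maximal_chain L filt_le C \<longrightarrow> C \<inter> interval_L L a0 a1 \<noteq> {})"

text \<open>The poset P_K on the carrier P plus a new point x_K, encoded via option:
  Some p for p in P, None for x_K.\<close>
definition S0 :: "'a set \<Rightarrow> ('a \<Rightarrow> 'a \<Rightarrow> bool) \<Rightarrow> 'a set \<Rightarrow> 'a set" where
  "S0 P le a0 = {s\<in>P - a0. \<forall>t\<in>P - a0. le s t \<longrightarrow> t = s}"

definition S1 :: "'a set \<Rightarrow> ('a \<Rightarrow> 'a \<Rightarrow> bool) \<Rightarrow> 'a set \<Rightarrow> 'a set" where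
  "S1 P le a1 = {s\<in>a1. \<forall>t\<in>a1. le t s \<longrightarrow> t = s}"

definition PK_carrier :: "'a set \<Rightarrow> 'a option set" where
  "PK_carrier P = Some ` P \<union> {None}"

fun PK_le :: "'a set \<Rightarrow> ('a \<Rightarrow> 'a \<Rightarrow> bool) \<Rightarrow> 'a set \<Rightarrow> 'a set \<Rightarrow> 'a option \<Rightarrow> 'a option \<Rightarrow> bool" where
  "PK_le P le a0 a1 (Some u) (Some v) = le u v"
| "PK_le P le a0 a1 None None = True"
| "PK_le P le a0 a1 (Some z) None = (\<exists>s\<in>S0 P le a0. le z s)"
| "PK_le P le a0 a1 None (Some y) = (\<exists>s\<in>S1 P le a1. le s y)"

definition convex_expansion :: "'a set \<Rightarrow> ('a \<Rightarrow> 'a \<Rightarrow> bool) \<Rightarrow> 'a set \<Rightarrow> 'a set \<Rightarrow> 'a option set set" where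
  "convex_expansion P le a0 a1 = filters (PK_carrier P) (PK_le P le a0 a1)"

definition down_K :: "'a set set \<Rightarrow> 'a set \<Rightarrow> 'a set set" where
  "down_K L a1 = {a\<in>L. filt_le a a1}"

definition up_K :: "'a set set \<Rightarrow> 'a set \<Rightarrow> 'a set set" where
  "up_K L a0 = {a\<in>L. filt_le a0 a}"

end

theory Submission
  imports Defs
begin

lemma po_refl: "partial_order_on_set P le \<Longrightarrow> x \<in> P \<Longrightarrow> le x x"
  unfolding partial_order_on_set_def by blast

lemma po_antisym: "partial_order_on_set P le \<Longrightarrow> x \<in> P \<Longrightarrow> y \<in> P \<Longrightarrow> le x y \<Longrightarrow> le y x \<Longrightarrow> x = y"
  unfolding partial_order_on_set_def by blast

lemma po_trans: "partial_order_on_set P le \<Longrightarrow> x \<in> P \<Longrightarrow> y \<in> P \<Longrightarrow> z \<in> P \<Longrightarrow> le x y \<Longrightarrow> le y z \<Longrightarrow> le x z"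
  unfolding partial_order_on_set_def by blast

lemma po_max:
  assumes po: "partial_order_on_set P le" and fin: "finite D" and sub: "D \<subseteq> P" and ne: "D \<noteq> {}"
  shows "\<exists>p\<in>D. \<forall>q\<in>D. le p q \<longrightarrow> q = p"
  using fin sub ne
proof (induction D rule: finite_induct)
  case empty then show ?case by simp
next
  case (insert x D)
  show ?case
  proof (cases "D = {}")
    case True then show ?thesis by auto
  next
    case False
    then obtain p where p: "p \<in> D" "\<forall>q\<in>D. le p q \<longrightarrow> q = p" using insert by auto
    show ?thesis
    proof (cases "le p x")
      case True
      have "\<forall>q\<in>insert x D. le x q \<longrightarrow> q = x"
      proof (intro ballI impI)
        fix q assume q: "q \<in> insert x D" "le x q"
        show "q = x"
        proof (cases "q = x")
          case False
          then have "q \<in> D" using q by auto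
          have xP: "x \<in> P" and DP: "D \<subseteq> P" using insert.prems by auto
          have "le p q" using po_trans[OF po, of p x q] True q(2) xP DP p(1) \<open>q \<in> D\<close> by blast
          then have "q = p" using p \<open>q \<in> D\<close> by auto
          then show ?thesis using po_antisym[OF po, of x p] True q(2) xP DP p(1) by blast
        qed simp
      qed
      then show ?thesis by auto
    next
      case False
      then show ?thesis using p by auto
    qed
  qed
qed

lemma po_dual: "partial_order_on_set P le \<Longrightarrow> partial_order_on_set P (\<lambda>x y. le y x)"
  unfolding partial_order_on_set_def by blast

lemma po_min:
  assumes po: "partial_order_on_set P le" and fin: "finite D" and sub: "D \<subseteq> P" and ne: "D \<noteq> {}"
  shows "\<exists>p\<in>D. \<forall>q\<in>D. le q p \<longrightarrow> q = p"
  using po_max[OF po_dual[OF po] fin sub ne] by simp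

lemma chain_upper:
  assumes fin: "finite Q" and M: "M \<subseteq> Pow Q" and ch: "is_chain M filt_le C"
    and G: "\<forall>c\<in>C. filt_le c G" and GQ: "G \<subseteq> Q"
  shows "card C \<le> card (Q - G) + 1"
proof -
  have CQ: "\<And>c. c \<in> C \<Longrightarrow> c \<subseteq> Q" using ch M unfolding is_chain_def by auto
  have inj: "inj_on card C"
  proof (rule inj_onI)
    fix c d assume cd: "c \<in> C" "d \<in> C" "card c = card d"
    have "c \<subseteq> d \<or> d \<subseteq> c" using ch cd unfolding is_chain_def filt_le_def by blast
    moreover have "finite c" "finite d" using CQ cd fin finite_subset by blast+
    ultimately show "c = d" using cd card_subset_eq by metis
  qed
  have "card ` C \<subseteq> {card G..card Q}"
  proof
    fix n assume "n \<in> card ` C"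
    then obtain c where c: "c \<in> C" "n = card c" by auto
    have "G \<subseteq> c" using G c unfolding filt_le_def by auto
    then show "n \<in> {card G..card Q}" using c CQ[OF c(1)] fin
      by (simp add: card_mono finite_subset)
  qed
  then have "card (card ` C) \<le> card {card G..card Q}" by (metis card_mono finite_atLeastAtMost)
  also have "\<dots> = card Q + 1 - card G" by simp
  also have "\<dots> = card (Q - G) + 1" using GQ fin card_mono[OF fin GQ]
    by (simp add: card_Diff_subset finite_subset)
  finally show ?thesis using card_image[OF inj] by simp
qed

lemma chain_exists:
  assumes fin: "finite Q" and M: "M \<subseteq> Pow Q" and QM: "Q \<in> M"
    and ext: "\<forall>G\<in>M. G \<noteq> Q \<longrightarrow> (\<exists>p\<in>Q - G. insert p G \<in> M)"
  shows "G \<in> M \<Longrightarrow> \<exists>C. is_chain M filt_le C \<and> (\<forall>c\<in>C. filt_le c G) \<and> card C = card (Q - G) + 1"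
proof (induction "card (Q - G)" arbitrary: G)
  case 0
  then have "G = Q" using M fin by auto
  then show ?case using 0 by (intro exI[of _ "{G}"]) (auto simp: is_chain_def filt_le_def)
next
  case (Suc n)
  then have "G \<noteq> Q" by auto
  then obtain p where p: "p \<in> Q - G" "insert p G \<in> M" using ext Suc.prems by auto
  have "Q - insert p G = (Q - G) - {p}" by auto
  moreover have "card ((Q - G) - {p}) = card (Q - G) - 1"
    using p fin by (intro card_Diff_singleton) auto
  ultimately have "card (Q - insert p G) = n" using Suc.hyps(2) by simp
  then obtain C where C: "is_chain M filt_le C" "\<forall>c\<in>C. filt_le c (insert p G)"
    "card C = card (Q - insert p G) + 1" using Suc.hyps(1) p by metis
  have GC: "G \<notin> C" using C(2) p unfolding filt_le_def by auto
  have finC: "finite C" using C(1) M fin unfolding is_chain_def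
    by (meson finite_Pow_iff finite_subset)
  show ?case
  proof (intro exI[of _ "insert G C"] conjI)
    show "is_chain M filt_le (insert G C)" using C(1,2) Suc.prems
      unfolding is_chain_def filt_le_def by blast
    show "\<forall>c\<in>insert G C. filt_le c G" using C(2) unfolding filt_le_def by blast
    show "card (insert G C) = card (Q - G) + 1"
      using GC finC C(3) \<open>card (Q - insert p G) = n\<close> Suc.hyps(2) by simp
  qed
qed

lemma grade:
  assumes fin: "finite Q" and M: "M \<subseteq> Pow Q" and QM: "Q \<in> M"
    and ext: "\<forall>G\<in>M. G \<noteq> Q \<longrightarrow> (\<exists>p\<in>Q - G. insert p G \<in> M)"
    and GM: "G \<in> M"
  shows "height M filt_le G = card (Q - G)"
proof -
  let ?S = "{card C | C. is_chain M filt_le C \<and> (\<forall>c\<in>C. filt_le c G)}"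
  have GQ: "G \<subseteq> Q" using GM M by auto
  obtain C0 where C0: "is_chain M filt_le C0" "\<forall>c\<in>C0. filt_le c G" "card C0 = card (Q - G) + 1"
    using chain_exists[OF fin M QM ext GM] by blast
  have ub: "\<And>n. n \<in> ?S \<Longrightarrow> n \<le> card (Q - G) + 1"
    using chain_upper[OF fin M _ _ GQ] by blast
  have "?S \<subseteq> {..card (Q - G) + 1}" using ub by auto
  then have finS: "finite ?S" using finite_subset by blast
  have "card (Q - G) + 1 \<in> ?S" using C0 by (intro CollectI exI[of _ C0]) simp
  then have "Max ?S = card (Q - G) + 1" using ub finS by (intro Max_eqI) auto
  then show ?thesis unfolding height_def by simp
qed

lemma filters_ext:
  assumes po: "partial_order_on_set P le" and fin: "finite P"
    and F: "F \<in> filters P le" and F2: "F2 \<in> filters P le" and sub: "F \<subseteq> F2" and ne: "F \<noteq> F2"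
  shows "\<exists>p\<in>F2 - F. insert p F \<in> filters P le"
proof -
  have F2P: "F2 \<subseteq> P" using F2 unfolding filters_def by auto
  have f: "finite (F2 - F)" using fin F2P finite_subset by blast
  have s: "F2 - F \<subseteq> P" using F2P by blast
  have n: "F2 - F \<noteq> {}" using sub ne by blast
  obtain p where p: "p \<in> F2 - F" "\<forall>q\<in>F2 - F. le p q \<longrightarrow> q = p"
    using po_max[OF po f s n] by blast
  have "insert p F \<in> filters P le"
    using p F F2 F2P unfolding filters_def by blast
  then show ?thesis using p by blast
qed

lemma S0_ex:
  assumes po: "partial_order_on_set P le" and fin: "finite P" and z: "z \<in> P - a0"
  shows "\<exists>s\<in>S0 P le a0. le z s"
proof -
  let ?D = "{t\<in>P - a0. le z t}"
  have "z \<in> ?D" using po_refl[OF po, of z] z by simp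
  moreover have s: "?D \<subseteq> P" by blast
  moreover have "finite ?D" using fin s finite_subset by blast
  ultimately obtain s where s: "s \<in> ?D" "\<forall>q\<in>?D. le s q \<longrightarrow> q = s"
    using po_max[OF po, of ?D] by blast
  have "s \<in> S0 P le a0" unfolding S0_def
  proof (intro CollectI conjI ballI impI)
    show "s \<in> P - a0" using s by auto
    fix t assume t: "t \<in> P - a0" "le s t"
    have "le z t" using po_trans[OF po, of z s t] s t z by simp
    then show "t = s" using s t by auto
  qed
  then show ?thesis using s by auto
qed

lemma S1_ex:
  assumes po: "partial_order_on_set P le" and fin: "finite P" and a1: "a1 \<subseteq> P" and y: "y \<in> a1"
  shows "\<exists>s\<in>S1 P le a1. le s y"
proof -
  let ?D = "{t\<in>a1. le t y}"
  have "y \<in> ?D" using po_refl[OF po, of y] y a1 by auto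
  moreover have s: "?D \<subseteq> P" using a1 by blast
  moreover have "finite ?D" using fin s finite_subset by blast
  ultimately obtain s where s: "s \<in> ?D" "\<forall>q\<in>?D. le q s \<longrightarrow> q = s"
    using po_min[OF po, of ?D] by blast
  have "s \<in> S1 P le a1" unfolding S1_def
  proof (intro CollectI conjI ballI impI)
    show "s \<in> a1" using s by auto
    fix t assume t: "t \<in> a1" "le t s"
    have "le t y" using po_trans[OF po, of t s y] s t a1 y by auto
    then show "t = s" using s t by auto
  qed
  then show ?thesis using s by auto
qed

lemma E_Some:
  assumes po: "partial_order_on_set P le" and fin: "finite P" and a0: "a0 \<in> filters P le"
    and FP: "F \<subseteq> P"
  shows "Some ` F \<in> convex_expansion P le a0 a1 \<longleftrightarrow> F \<in> filters P le \<and> F \<subseteq> a0"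
proof
  assume H: "Some ` F \<in> convex_expansion P le a0 a1"
  then have H': "\<And>u w. u \<in> F \<Longrightarrow> w \<in> PK_carrier P \<Longrightarrow> PK_le P le a0 a1 (Some u) w \<Longrightarrow> w \<in> Some ` F"
    unfolding convex_expansion_def filters_def by blast
  have "F \<in> filters P le" unfolding filters_def
  proof (intro CollectI conjI ballI impI)
    show "F \<subseteq> P" by fact
    fix u v assume "u \<in> F" "v \<in> P" "le u v"
    then have "Some v \<in> Some ` F" using H'[of u "Some v"] by (simp add: PK_carrier_def)
    then show "v \<in> F" by auto
  qed
  moreover have "F \<subseteq> a0"
  proof
    fix z assume z: "z \<in> F"
    show "z \<in> a0"
    proof (rule ccontr)
      assume "z \<notin> a0"
      then have "PK_le P le a0 a1 (Some z) None" using S0_ex[OF po fin, of z a0] z FP by auto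
      then have "None \<in> Some ` F" using H'[of z None] z by (simp add: PK_carrier_def)
      then show False by auto
    qed
  qed
  ultimately show "F \<in> filters P le \<and> F \<subseteq> a0" by simp
next
  assume H: "F \<in> filters P le \<and> F \<subseteq> a0"
  show "Some ` F \<in> convex_expansion P le a0 a1"
    unfolding convex_expansion_def filters_def
  proof (intro CollectI conjI ballI impI)
    show "Some ` F \<subseteq> PK_carrier P" using FP by (auto simp: PK_carrier_def)
    fix w y assume w: "w \<in> Some ` F" and y: "y \<in> PK_carrier P" and le: "PK_le P le a0 a1 w y"
    obtain u where u: "w = Some u" "u \<in> F" using w by auto
    show "y \<in> Some ` F"
    proof (cases y)
      case None
      then obtain s where "s \<in> S0 P le a0" "le u s" using le u by auto
      then have "s \<in> a0" using u H a0 unfolding S0_def filters_def by blast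
      then show ?thesis using \<open>s \<in> S0 P le a0\<close> unfolding S0_def by auto
    next
      case (Some v)
      then show ?thesis using H u le y unfolding filters_def PK_carrier_def by auto
    qed
  qed
qed

lemma E_None:
  assumes po: "partial_order_on_set P le" and fin: "finite P" and a1: "a1 \<in> filters P le"
    and FP: "F \<subseteq> P"
  shows "insert None (Some ` F) \<in> convex_expansion P le a0 a1 \<longleftrightarrow> F \<in> filters P le \<and> a1 \<subseteq> F"
proof
  assume H: "insert None (Some ` F) \<in> convex_expansion P le a0 a1"
  then have H': "\<And>u w. u \<in> insert None (Some ` F) \<Longrightarrow> w \<in> PK_carrier P \<Longrightarrow> PK_le P le a0 a1 u w \<Longrightarrow> w \<in> insert None (Some ` F)"
    unfolding convex_expansion_def filters_def by blast
  have "F \<in> filters P le" unfolding filters_def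
  proof (intro CollectI conjI ballI impI)
    show "F \<subseteq> P" by fact
    fix u v assume "u \<in> F" "v \<in> P" "le u v"
    then have "Some v \<in> insert None (Some ` F)" using H'[of "Some u" "Some v"] by (simp add: PK_carrier_def)
    then show "v \<in> F" by auto
  qed
  moreover have "a1 \<subseteq> F"
  proof
    fix y assume y: "y \<in> a1"
    have a1P: "a1 \<subseteq> P" using a1 unfolding filters_def by auto
    then have "PK_le P le a0 a1 None (Some y)" using S1_ex[OF po fin a1P y] by auto
    then have "Some y \<in> insert None (Some ` F)" using H'[of None "Some y"] y a1P by (auto simp add: PK_carrier_def)
    then show "y \<in> F" by auto
  qed
  ultimately show "F \<in> filters P le \<and> a1 \<subseteq> F" by simp
next
  assume H: "F \<in> filters P le \<and> a1 \<subseteq> F"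
  show "insert None (Some ` F) \<in> convex_expansion P le a0 a1"
    unfolding convex_expansion_def filters_def
  proof (intro CollectI conjI ballI impI)
    show "insert None (Some ` F) \<subseteq> PK_carrier P" using FP by (auto simp: PK_carrier_def)
    fix w y assume w: "w \<in> insert None (Some ` F)" and y: "y \<in> PK_carrier P" and le: "PK_le P le a0 a1 w y"
    show "y \<in> insert None (Some ` F)"
    proof (cases y)
      case None then show ?thesis by simp
    next
      case (Some v)
      show ?thesis
      proof (cases w)
        case None
        then obtain s where "s \<in> S1 P le a1" "le s v" using le Some by auto
        then have "v \<in> a1" using a1 y Some unfolding S1_def filters_def PK_carrier_def by auto
        then show ?thesis using H Some by auto
      next
        case (Some u)
        then show ?thesis using H w le y \<open>y = Some v\<close> unfolding filters_def PK_carrier_def by auto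
      qed
    qed
  qed
qed


theorem proposition1:
  fixes P :: "'a set" and le :: "'a \<Rightarrow> 'a \<Rightarrow> bool" and a0 a1 :: "'a set" and x :: real
  assumes "finite P"
    and "partial_order_on_set P le"
    and "is_cutting (filters P le) a0 a1"
  shows "rank_gen (convex_expansion P le a0 a1) filt_le x
           = rank_sum (filters P le) filt_le (down_K (filters P le) a1) x
             + x * rank_sum (filters P le) filt_le (up_K (filters P le) a0) x
       \<and> rank_sum (filters P le) filt_le (down_K (filters P le) a1) x
             + x * rank_sum (filters P le) filt_le (up_K (filters P le) a0) x
           = rank_gen (down_K (filters P le) a1) filt_le x
             + x ^ (height (filters P le) filt_le a0 + 1) * rank_gen (up_K (filters P le) a0) filt_le x"
proof -
  note fin = assms(1) and po = assms(2)
  define L where "L = filters P le"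
  define D where "D = down_K L a1"
  define U where "U = up_K L a0"
  define E where "E = convex_expansion P le a0 a1"
  define PK where "PK = PK_carrier P"
  have a0L: "a0 \<in> L" and a1L: "a1 \<in> L" and a10: "a1 \<subseteq> a0"
    using assms(3) unfolding is_cutting_def L_def filt_le_def by auto
  have LP: "L \<subseteq> Pow P" unfolding L_def filters_def by auto
  have PL: "P \<in> L" unfolding L_def filters_def by auto
  have a0P: "a0 \<subseteq> P" using a0L LP by auto
  have finL: "finite L" using LP fin by (meson finite_Pow_iff finite_subset)
  have finD: "finite D" and finU: "finite U" using finL unfolding D_def U_def down_K_def up_K_def by auto
  have ext: "\<And>F F2. F \<in> L \<Longrightarrow> F2 \<in> L \<Longrightarrow> F \<subseteq> F2 \<Longrightarrow> F \<noteq> F2 \<Longrightarrow> \<exists>p\<in>F2 - F. insert p F \<in> L"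
    using filters_ext[OF po fin] unfolding L_def by blast
  have hL: "\<And>F. F \<in> L \<Longrightarrow> height L filt_le F = card (P - F)"
  proof -
    fix F assume "F \<in> L"
    show "height L filt_le F = card (P - F)"
    proof (rule grade[OF fin LP PL _ \<open>F \<in> L\<close>], intro ballI impI)
      fix G assume "G \<in> L" "G \<noteq> P"
      then show "\<exists>p\<in>P - G. insert p G \<in> L" using ext[OF _ PL] LP by blast
    qed
  qed
  have hD: "\<And>F. F \<in> D \<Longrightarrow> height D filt_le F = card (P - F)"
  proof -
    fix F assume "F \<in> D"
    show "height D filt_le F = card (P - F)"
    proof (rule grade[OF fin _ _ _ \<open>F \<in> D\<close>])
      show "D \<subseteq> Pow P" using LP unfolding D_def down_K_def by auto
      show "P \<in> D" using PL a1L LP unfolding D_def down_K_def filt_le_def by auto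
      show "\<forall>G\<in>D. G \<noteq> P \<longrightarrow> (\<exists>p\<in>P - G. insert p G \<in> D)"
      proof (intro ballI impI)
        fix G assume "G \<in> D" "G \<noteq> P"
        then obtain p where "p\<in>P - G" "insert p G \<in> L" using ext[OF _ PL] LP unfolding D_def down_K_def by blast
        then show "\<exists>p\<in>P - G. insert p G \<in> D" using \<open>G \<in> D\<close> unfolding D_def down_K_def filt_le_def by blast
      qed
    qed
  qed
  have hU: "\<And>F. F \<in> U \<Longrightarrow> height U filt_le F = card (a0 - F)"
  proof -
    fix F assume "F \<in> U"
    show "height U filt_le F = card (a0 - F)"
    proof (rule grade[OF finite_subset[OF a0P fin] _ _ _ \<open>F \<in> U\<close>])
      show "U \<subseteq> Pow a0" unfolding U_def up_K_def filt_le_def by auto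
      show "a0 \<in> U" using a0L unfolding U_def up_K_def filt_le_def by auto
      show "\<forall>G\<in>U. G \<noteq> a0 \<longrightarrow> (\<exists>p\<in>a0 - G. insert p G \<in> U)"
      proof (intro ballI impI)
        fix G assume "G \<in> U" "G \<noteq> a0"
        then obtain p where "p\<in>a0 - G" "insert p G \<in> L" using ext[OF _ a0L] unfolding U_def up_K_def filt_le_def by blast
        then show "\<exists>p\<in>a0 - G. insert p G \<in> U" using \<open>G \<in> U\<close> unfolding U_def up_K_def filt_le_def by blast
      qed
    qed
  qed
  have ES: "\<And>F. F \<subseteq> P \<Longrightarrow> Some ` F \<in> E \<longleftrightarrow> F \<in> U"
    using E_Some[OF po fin, of a0] a0L unfolding E_def U_def up_K_def L_def filt_le_def by auto
  have EN: "\<And>F. F \<subseteq> P \<Longrightarrow> insert None (Some ` F) \<in> E \<longleftrightarrow> F \<in> D"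
    using E_None[OF po fin, of a1] a1L unfolding E_def D_def down_K_def L_def filt_le_def by auto
  have UP: "\<And>F. F \<in> U \<Longrightarrow> F \<subseteq> P" and DP: "\<And>F. F \<in> D \<Longrightarrow> F \<subseteq> P"
    using LP unfolding U_def D_def up_K_def down_K_def by auto
  have EPK: "E \<subseteq> Pow PK" unfolding E_def PK_def convex_expansion_def filters_def by auto
  have PKeq: "PK = insert None (Some ` P)" unfolding PK_def PK_carrier_def by auto
  have finPK: "finite PK" using fin PKeq by simp
  have Edecomp: "E = (\<lambda>F. insert None (Some ` F)) ` D \<union> (\<lambda>F. Some ` F) ` U"
  proof
    show "E \<subseteq> (\<lambda>F. insert None (Some ` F)) ` D \<union> (\<lambda>F. Some ` F) ` U"
    proof
      fix G assume G: "G \<in> E"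
      define F where "F = {p. Some p \<in> G}"
      have GPK: "G \<subseteq> PK" using G EPK by auto
      have FP: "F \<subseteq> P" using GPK PKeq unfolding F_def by auto
      show "G \<in> (\<lambda>F. insert None (Some ` F)) ` D \<union> (\<lambda>F. Some ` F) ` U"
      proof (cases "None \<in> G")
        case True
        have "G = insert None (Some ` F)"
        proof (rule set_eqI)
          fix y show "y \<in> G \<longleftrightarrow> y \<in> insert None (Some ` F)"
            using True unfolding F_def by (cases y) auto
        qed
        then show ?thesis using EN[OF FP] G by blast
      next
        case False
        have "G = Some ` F"
        proof (rule set_eqI)
          fix y show "y \<in> G \<longleftrightarrow> y \<in> Some ` F"
            using False unfolding F_def by (cases y) auto
        qed
        then show ?thesis using ES[OF FP] G by blast
      qed
    qed
    show "(\<lambda>F. insert None (Some ` F)) ` D \<union> (\<lambda>F. Some ` F) ` U \<subseteq> E"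
    proof
      fix G assume "G \<in> (\<lambda>F. insert None (Some ` F)) ` D \<union> (\<lambda>F. Some ` F) ` U"
      then show "G \<in> E"
      proof
        assume "G \<in> (\<lambda>F. insert None (Some ` F)) ` D"
        then obtain F where F: "F \<in> D" "G = insert None (Some ` F)" by blast
        then show ?thesis using EN[OF DP[OF F(1)]] by simp
      next
        assume "G \<in> (\<lambda>F. Some ` F) ` U"
        then obtain F where F: "F \<in> U" "G = Some ` F" by blast
        then show ?thesis using ES[OF UP[OF F(1)]] by simp
      qed
    qed
  qed
  have hE: "\<And>G. G \<in> E \<Longrightarrow> height E filt_le G = card (PK - G)"
  proof -
    fix G assume "G \<in> E"
    show "height E filt_le G = card (PK - G)"
    proof (rule grade[OF finPK EPK _ _ \<open>G \<in> E\<close>])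
      show "PK \<in> E" using EN[of P] PL a1L LP PKeq unfolding D_def down_K_def filt_le_def by auto
      show "\<forall>G\<in>E. G \<noteq> PK \<longrightarrow> (\<exists>p\<in>PK - G. insert p G \<in> E)"
      proof (intro ballI impI)
        fix G assume G: "G \<in> E" "G \<noteq> PK"
        show "\<exists>p\<in>PK - G. insert p G \<in> E"
        proof (cases "G \<in> (\<lambda>F. insert None (Some ` F)) ` D")
          case True
          then obtain F where F: "F \<in> D" "G = insert None (Some ` F)" by auto
          then have "F \<noteq> P" using G PKeq by auto
          have FL: "F \<in> L" using F(1) unfolding D_def down_K_def by simp
          obtain p where p: "p \<in> P - F" "insert p F \<in> L" using ext[OF FL PL DP[OF F(1)] \<open>F \<noteq> P\<close>] by blast
          then have "insert p F \<in> D" using F unfolding D_def down_K_def filt_le_def by auto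
          then have "insert None (Some ` (insert p F)) \<in> E" using EN[of "insert p F"] DP by blast
          then have "insert (Some p) G \<in> E" using F(2) by (simp add: insert_commute)
          moreover have "Some p \<in> PK - G" using p F PKeq by auto
          ultimately show ?thesis by blast
        next
          case False
          then have "G \<in> (\<lambda>F. Some ` F) ` U" using G(1) Edecomp by blast
          then obtain F where F: "F \<in> U" "G = Some ` F" by blast
          show ?thesis
          proof (cases "F = a0")
            case True
            have "a0 \<in> D" using a0L a10 unfolding D_def down_K_def filt_le_def by auto
            then have "insert None G \<in> E" using EN[OF a0P] F True by auto
            moreover have "None \<in> PK - G" using F PKeq by auto
            ultimately show ?thesis by blast
          next
            case False
            have FL: "F \<in> L" and Fa0: "F \<subseteq> a0" using F(1) unfolding U_def up_K_def filt_le_def by auto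
            obtain p where p: "p \<in> a0 - F" "insert p F \<in> L" using ext[OF FL a0L Fa0 False] by blast
            then have "insert p F \<in> U" using Fa0 unfolding U_def up_K_def filt_le_def by auto
            then have "Some ` (insert p F) \<in> E" using ES[of "insert p F"] UP by blast
            then have "insert (Some p) G \<in> E" using F(2) by simp
            moreover have "Some p \<in> PK - G" using p F PKeq a0P by auto
            ultimately show ?thesis by blast
          qed
        qed
      qed
    qed
  qed
  have injN: "inj_on (\<lambda>F. insert None (Some ` F)) D"
  proof (rule inj_onI)
    fix A B assume "insert None (Some ` A) = insert None (Some ` B)"
    then have "Some ` A = Some ` B" by auto
    then show "A = B" by (simp add: inj_image_eq_iff)
  qed
  have injS: "inj_on (\<lambda>F. Some ` F) U"
    by (rule inj_onI) (simp add: inj_image_eq_iff)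
  have disj: "(\<lambda>F. insert None (Some ` F)) ` D \<inter> (\<lambda>F. Some ` F) ` U = {}" by auto
  have cN: "\<And>F. F \<in> D \<Longrightarrow> card (PK - insert None (Some ` F)) = card (P - F)"
  proof -
    fix F assume "F \<in> D"
    have "PK - insert None (Some ` F) = Some ` (P - F)" using PKeq by auto
    then show "card (PK - insert None (Some ` F)) = card (P - F)" by (simp add: card_image)
  qed
  have cS: "\<And>F. F \<in> U \<Longrightarrow> card (PK - Some ` F) = card (P - F) + 1"
  proof -
    fix F assume "F \<in> U"
    have "PK - Some ` F = insert None (Some ` (P - F))" using PKeq by auto
    moreover have "finite (Some ` (P - F))" using fin by simp
    ultimately show "card (PK - Some ` F) = card (P - F) + 1" by (simp add: card_image)
  qed
  have eq1: "rank_gen E filt_le x = rank_sum L filt_le D x + x * rank_sum L filt_le U x"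
  proof -
    have "rank_gen E filt_le x = (\<Sum>G\<in>E. x ^ card (PK - G))"
      unfolding rank_gen_def rank_sum_def using hE by simp
    also have "\<dots> = (\<Sum>G\<in>(\<lambda>F. insert None (Some ` F)) ` D. x ^ card (PK - G))
                  + (\<Sum>G\<in>(\<lambda>F. Some ` F) ` U. x ^ card (PK - G))"
      unfolding Edecomp using disj finD finU by (simp add: sum.union_disjoint)
    also have "\<dots> = (\<Sum>F\<in>D. x ^ card (P - F)) + (\<Sum>F\<in>U. x ^ (card (P - F) + 1))"
      using cN cS by (simp add: sum.reindex[OF injN] sum.reindex[OF injS])
    also have "\<dots> = rank_sum L filt_le D x + x * rank_sum L filt_le U x"
    proof -
      have "(\<Sum>F\<in>D. x ^ card (P - F)) = rank_sum L filt_le D x"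
        unfolding rank_sum_def
      proof (rule sum.cong[OF refl])
        fix F assume "F \<in> D"
        then have "F \<in> L" unfolding D_def down_K_def by simp
        then show "x ^ card (P - F) = x ^ height L filt_le F" using hL by simp
      qed
      moreover have "(\<Sum>F\<in>U. x ^ (card (P - F) + 1)) = x * rank_sum L filt_le U x"
        unfolding rank_sum_def sum_distrib_left
      proof (rule sum.cong[OF refl])
        fix F assume "F \<in> U"
        then have "F \<in> L" unfolding U_def up_K_def by simp
        then show "x ^ (card (P - F) + 1) = x * x ^ height L filt_le F" using hL by simp
      qed
      ultimately show ?thesis by simp
    qed
    finally show ?thesis .
  qed
  have eq2: "rank_sum L filt_le D x + x * rank_sum L filt_le U x
      = rank_gen D filt_le x + x ^ (height L filt_le a0 + 1) * rank_gen U filt_le x"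
  proof -
    have "rank_sum L filt_le D x = rank_gen D filt_le x"
      unfolding rank_gen_def rank_sum_def
    proof (rule sum.cong[OF refl])
      fix F assume F: "F \<in> D"
      then have "F \<in> L" unfolding D_def down_K_def by simp
      then show "x ^ height L filt_le F = x ^ height D filt_le F" using hL hD[OF F] by simp
    qed
    moreover have "x * rank_sum L filt_le U x = x ^ (height L filt_le a0 + 1) * rank_gen U filt_le x"
    proof -
      have cardU: "\<And>F. F \<in> U \<Longrightarrow> card (P - F) = card (P - a0) + card (a0 - F)"
      proof -
        fix F assume "F \<in> U"
        then have "F \<subseteq> a0" unfolding U_def up_K_def filt_le_def by auto
        then have e: "P - F = (P - a0) \<union> (a0 - F)" using a0P by auto
        have f1: "finite (P - a0)" using fin by simp
        have f2: "finite (a0 - F)" using fin a0P finite_subset by blast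
        have "card ((P - a0) \<union> (a0 - F)) = card (P - a0) + card (a0 - F)"
          by (rule card_Un_disjoint[OF f1 f2]) blast
        then show "card (P - F) = card (P - a0) + card (a0 - F)" using e by simp
      qed
      have "x * rank_sum L filt_le U x = (\<Sum>F\<in>U. x * x ^ height L filt_le F)"
        unfolding rank_sum_def sum_distrib_left ..
      also have "\<dots> = (\<Sum>F\<in>U. x ^ (height L filt_le a0 + 1) * x ^ height U filt_le F)"
      proof (rule sum.cong[OF refl])
        fix F assume F: "F \<in> U"
        have "F \<in> L" using F unfolding U_def up_K_def by simp
        then have h1: "height L filt_le F = card (P - a0) + card (a0 - F)" using hL cardU[OF F] by simp
        have h2: "height U filt_le F = card (a0 - F)" using hU[OF F] .
        have h3: "height L filt_le a0 = card (P - a0)" using hL[OF a0L] .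
        show "x * x ^ height L filt_le F = x ^ (height L filt_le a0 + 1) * x ^ height U filt_le F"
          unfolding h1 h2 h3 by (simp add: power_add)
      qed
      also have "\<dots> = x ^ (height L filt_le a0 + 1) * rank_gen U filt_le x"
        unfolding rank_gen_def rank_sum_def sum_distrib_left ..
      finally show ?thesis .
    qed
    ultimately show ?thesis by simp
  qed
  show ?thesis
    unfolding E_def[symmetric] L_def[symmetric] D_def[symmetric] U_def[symmetric]
    using eq1 eq2 by (rule conjI)
qed

end
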